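(* Let $n\in\mathbb{N}$, $\tau\in(0,\infty)$, and let $\mu$ be a log-concave probability measure on $\mathbb{R}^n$ with density $\rho$ (with respect to Lebesgue measure on $\mathbb{R}^n$). Let $m_\rho=\max\rho$ and $K=\{x\in\mathbb{R}^n:\rho(x)\ge e^{-\tau}m_\rho\}$. Then $$1\le m_\rho\,c_n(\tau)\,|K|,\qquad c_n(\tau)=n\int_1^\infty t^{n-1}e^{-\tau t}\,dt+1,$$ where $|K|$ is the Lebesgue volume of $K$.
   Context: A log-concave probability measure on $\mathbb{R}^n$ with density $\rho$ means $\rho=e^{-V}$ for a convex function $V\colon\mathbb{R}^n\to(-\infty,+\infty]$. *)

theory Defs
  imports "HOL-Probability.Probability"
begin

definition ext_convex :: "('a::real_vector \<Rightarrow> ereal) \<Rightarrow> bool" where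
  "ext_convex V \<longleftrightarrow> (\<forall>x. V x \<noteq> -\<infinity>) \<and> convex {(x, y::real). V x \<le> ereal y}"

definition exp_neg_ereal :: "ereal \<Rightarrow> real" where
  "exp_neg_ereal v = (if v = \<infinity> then 0 else exp (- real_of_ereal v))"

definition log_concave_fun :: "('a::real_vector \<Rightarrow> real) \<Rightarrow> bool" where
  "log_concave_fun \<rho> \<longleftrightarrow> (\<exists>V. ext_convex V \<and> (\<forall>x. \<rho> x = exp_neg_ereal (V x)))"

end

theory Submission
  imports Defs "HOL-Real_Asymp.Real_Asymp"
begin


lemma lc_nonneg: "log_concave_fun \<rho> \<Longrightarrow> 0 \<le> \<rho> x"
  unfolding log_concave_fun_def exp_neg_ereal_def by auto

lemma lc_ineq:
  fixes \<rho> :: "'a::real_vector \<Rightarrow> real"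
  assumes lc: "log_concave_fun \<rho>" and a: "0 < a" and b: "0 < b"
    and ax: "a \<le> \<rho> x" and hb: "b \<le> \<rho> y" and l: "0 \<le> l" "l \<le> 1"
  shows "exp ((1-l)*ln a + l*ln b) \<le> \<rho> ((1-l) *\<^sub>R x + l *\<^sub>R y)"
proof -
  obtain V where cv: "ext_convex V" and rV: "\<And>x. \<rho> x = exp_neg_ereal (V x)"
    using lc unfolding log_concave_fun_def by blast
  have ninf: "\<And>x. V x \<noteq> -\<infinity>" and C: "convex {(x, y::real). V x \<le> ereal y}"
    using cv unfolding ext_convex_def by auto
  have key: "V z \<le> ereal (- ln c)" if "0 < c" "c \<le> \<rho> z" for z c
  proof -
    have "V z \<noteq> \<infinity>" using that rV[of z] by (auto simp: exp_neg_ereal_def)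
    then obtain r where r: "V z = ereal r" using ninf[of z] by (cases "V z") auto
    have "c \<le> exp (- r)" using that rV[of z] r by (simp add: exp_neg_ereal_def)
    hence "ln c \<le> - r" using that by (metis ln_exp ln_le_cancel_iff exp_gt_zero)
    thus ?thesis using r by simp
  qed
  have "(x, - ln a) \<in> {(x, y::real). V x \<le> ereal y}" using key[OF a ax] by simp
  moreover have "(y, - ln b) \<in> {(x, y::real). V x \<le> ereal y}" using key[OF b hb] by simp
  ultimately have "(1-l) *\<^sub>R (x, - ln a) + l *\<^sub>R (y, - ln b) \<in> {(x, y::real). V x \<le> ereal y}"
    using C l by (intro convexD) auto
  hence le: "V ((1-l) *\<^sub>R x + l *\<^sub>R y) \<le> ereal (- ((1-l)*ln a + l*ln b))"
    by (simp add: algebra_simps)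
  define z where "z = (1-l) *\<^sub>R x + l *\<^sub>R y"
  have "V z \<noteq> \<infinity>" using le z_def by auto
  then obtain r where r: "V z = ereal r" using ninf[of z] by (cases "V z") auto
  have "r \<le> - ((1-l)*ln a + l*ln b)" using le r z_def by simp
  hence "exp ((1-l)*ln a + l*ln b) \<le> exp (- r)" by simp
  thus ?thesis using rV[of z] r z_def by (simp add: exp_neg_ereal_def)
qed

lemma lc_convex_level:
  fixes \<rho> :: "'a::real_vector \<Rightarrow> real"
  assumes lc: "log_concave_fun \<rho>"
  shows "convex {x. c \<le> \<rho> x}"
proof (cases "c > 0")
  case True
  show ?thesis unfolding convex_def
  proof (intro allI impI ballI, clarsimp)
    fix x y and p q :: real assume "c \<le> \<rho> x" "c \<le> \<rho> y" "0 \<le> p" "0 \<le> q" "p + q = 1"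
    then have "exp ((1-q)*ln c + q*ln c) \<le> \<rho> ((1-q) *\<^sub>R x + q *\<^sub>R y)"
      using lc_ineq[OF lc True True] by auto
    moreover have "exp ((1-q)*ln c + q*ln c) = c" using True by (simp add: algebra_simps)
    moreover have "p = 1 - q" using \<open>p+q=1\<close> by simp
    ultimately show "c \<le> \<rho> (p *\<^sub>R x + q *\<^sub>R y)" by simp
  qed
next
  case False
  hence "{x. c \<le> \<rho> x} = UNIV" using lc_nonneg[OF lc] by (auto intro: order_trans[of c 0])
  thus ?thesis by simp
qed

lemma convex_sets_lebesgue:
  fixes S :: "'a::euclidean_space set"
  assumes "convex S" shows "S \<in> sets lebesgue"
proof -
  have "S - interior S \<subseteq> frontier S" using closure_subset by (auto simp: frontier_def)
  hence "negligible (S - interior S)"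
    using negligible_subset negligible_convex_frontier[OF assms] by blast
  hence "S - interior S \<in> sets lebesgue" using negligible_iff_null_sets by blast
  moreover have "interior S \<in> sets lebesgue" by (simp add: borel_open)
  moreover have "S = interior S \<union> (S - interior S)" using interior_subset by blast
  ultimately show ?thesis by (metis sets.Un)
qed

lemma lc_measurable:
  fixes \<rho> :: "'a::euclidean_space \<Rightarrow> real"
  assumes lc: "log_concave_fun \<rho>"
  shows "\<rho> \<in> borel_measurable lebesgue"
  by (rule borel_measurableI_ge) (simp add: convex_sets_lebesgue lc_convex_level[OF lc])



lemma exp_tail:
  fixes \<tau> a :: real assumes "\<tau> > 0"
  shows "(\<integral>\<^sup>+u. ennreal (\<tau> * exp (- \<tau> * u)) * indicator {a..} u \<partial>lborel) = ennreal (exp (- \<tau> * a))"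
proof -
  have "(\<integral>\<^sup>+u. ennreal (\<tau> * exp (- \<tau> * u)) * indicator {a..} u \<partial>lborel) = 0 - (- exp (- \<tau> * a))"
  proof (rule nn_integral_FTC_atLeast[where F="\<lambda>u. - exp (- \<tau> * u)"])
    show "(\<lambda>u. \<tau> * exp (- \<tau> * u)) \<in> borel_measurable borel" by measurable
    show "((\<lambda>u. - exp (- \<tau> * u)) has_real_derivative \<tau> * exp (- \<tau> * u)) (at u)" for u
      by (auto intro!: derivative_eq_intros)
    show "0 \<le> \<tau> * exp (- \<tau> * u)" for u using assms by simp
    have "((\<lambda>u. exp (- \<tau> * u)) \<longlongrightarrow> 0) at_top"
      using assms by real_asymp
    then show "((\<lambda>u. - exp (- \<tau> * u)) \<longlongrightarrow> 0) at_top"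
      using tendsto_minus by fastforce
  qed
  thus ?thesis by simp
qed

lemma pow_Icc:
  fixes u :: real assumes "1 \<le> u"
  shows "(\<integral>\<^sup>+t. ennreal (real (Suc m) * t ^ m) * indicator {1..u} t \<partial>lborel) = ennreal (u ^ Suc m - 1)"
proof -
  have "(\<integral>\<^sup>+t. ennreal (real (Suc m) * t ^ m) * indicator {1..u} t \<partial>lborel) = u ^ Suc m - 1 ^ Suc m"
  proof (rule nn_integral_FTC_Icc[where F="\<lambda>t. t ^ Suc m"])
    show "(\<lambda>t. real (Suc m) * t ^ m) \<in> borel_measurable borel" by measurable
    show "((\<lambda>t. t ^ Suc m) has_real_derivative real (Suc m) * t ^ m) (at t)" for t
      using DERIV_pow[of "Suc m" t] by simp
    show "0 \<le> real (Suc m) * t ^ m" if "t \<in> {1..u}" for t using that by simp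
  qed (use assms in auto)
  thus ?thesis by simp
qed

lemma Q_eq:
  fixes \<tau> :: real assumes tau: "\<tau> > 0"
  shows "(\<integral>\<^sup>+u. ennreal (\<tau> * exp (- \<tau> * u) * u ^ Suc m) * indicator {1..} u \<partial>lborel)
       = ennreal (exp (- \<tau>)) + of_nat (Suc m) * (\<integral>\<^sup>+t. ennreal (t ^ m * exp (- \<tau> * t)) * indicator {1..} t \<partial>lborel)"
proof -
  have "(\<integral>\<^sup>+u. ennreal (\<tau> * exp (- \<tau> * u) * u ^ Suc m) * indicator {1..} u \<partial>lborel)
      = (\<integral>\<^sup>+u. ennreal (\<tau> * exp (- \<tau> * u)) * indicator {1..} u
           + ennreal (\<tau> * exp (- \<tau> * u) * (u ^ Suc m - 1)) * indicator {1..} u \<partial>lborel)"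
  proof (rule nn_integral_cong)
    fix u :: real
    show "ennreal (\<tau> * exp (- \<tau> * u) * u ^ Suc m) * indicator {1..} u
      = ennreal (\<tau> * exp (- \<tau> * u)) * indicator {1..} u
           + ennreal (\<tau> * exp (- \<tau> * u) * (u ^ Suc m - 1)) * indicator {1..} u"
    proof (cases "1 \<le> u")
      case True
      have "1 \<le> u ^ Suc m" using True one_le_power by blast
      hence "\<tau> * exp (- \<tau> * u) * u ^ Suc m = \<tau> * exp (- \<tau> * u) + \<tau> * exp (- \<tau> * u) * (u ^ Suc m - 1)"
        by (simp add: algebra_simps)
      moreover have "0 \<le> \<tau> * exp (- \<tau> * u) * (u ^ Suc m - 1)" using tau \<open>1 \<le> u ^ Suc m\<close> by simp
      ultimately show ?thesis using True tau by (simp add: ennreal_plus[symmetric] del: ennreal_plus)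
    qed simp
  qed
  also have "\<dots> = (\<integral>\<^sup>+u. ennreal (\<tau> * exp (- \<tau> * u)) * indicator {1..} u \<partial>lborel)
      + (\<integral>\<^sup>+u. ennreal (\<tau> * exp (- \<tau> * u) * (u ^ Suc m - 1)) * indicator {1..} u \<partial>lborel)"
    by (rule nn_integral_add) auto
  also have "(\<integral>\<^sup>+u. ennreal (\<tau> * exp (- \<tau> * u)) * indicator {1..} u \<partial>lborel) = ennreal (exp (- \<tau>))"
    using exp_tail[OF tau, of 1] by simp
  also have "(\<integral>\<^sup>+u. ennreal (\<tau> * exp (- \<tau> * u) * (u ^ Suc m - 1)) * indicator {1..} u \<partial>lborel)
     = (\<integral>\<^sup>+u. (\<integral>\<^sup>+t. ennreal (\<tau> * exp (- \<tau> * u) * (real (Suc m) * t ^ m)) * indicator {1..} t * indicator {t..} u \<partial>lborel) \<partial>lborel)"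
  proof (rule nn_integral_cong)
    fix u :: real
    show "ennreal (\<tau> * exp (- \<tau> * u) * (u ^ Suc m - 1)) * indicator {1..} u
       = (\<integral>\<^sup>+t. ennreal (\<tau> * exp (- \<tau> * u) * (real (Suc m) * t ^ m)) * indicator {1..} t * indicator {t..} u \<partial>lborel)"
    proof (cases "1 \<le> u")
      case True
      have "(\<integral>\<^sup>+t. ennreal (\<tau> * exp (- \<tau> * u) * (real (Suc m) * t ^ m)) * indicator {1..} t * indicator {t..} u \<partial>lborel)
         = (\<integral>\<^sup>+t. ennreal (\<tau> * exp (- \<tau> * u)) * (ennreal (real (Suc m) * t ^ m) * indicator {1..u} t) \<partial>lborel)"
        by (rule nn_integral_cong) (auto simp: indicator_def ennreal_mult[symmetric] tau simp del: of_nat_Suc intro!: ennreal_mult' mult_nonneg_nonneg less_imp_le[OF tau])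
      also have "\<dots> = ennreal (\<tau> * exp (- \<tau> * u)) * (\<integral>\<^sup>+t. ennreal (real (Suc m) * t ^ m) * indicator {1..u} t \<partial>lborel)"
        by (rule nn_integral_cmult) auto
      also have "\<dots> = ennreal (\<tau> * exp (- \<tau> * u)) * ennreal (u ^ Suc m - 1)"
        using pow_Icc[OF True] by simp
      finally have X: "(\<integral>\<^sup>+t. ennreal (\<tau> * exp (- \<tau> * u) * (real (Suc m) * t ^ m)) * indicator {1..} t * indicator {t..} u \<partial>lborel) = ennreal (\<tau> * exp (- \<tau> * u)) * ennreal (u ^ Suc m - 1)" .
      have "ennreal (\<tau> * exp (- \<tau> * u) * (u ^ Suc m - 1)) = ennreal (\<tau> * exp (- \<tau> * u)) * ennreal (u ^ Suc m - 1)"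
        by (rule ennreal_mult') (use tau in simp)
      with X True show ?thesis by simp
    next
      case False
      have "(\<integral>\<^sup>+t. ennreal (\<tau> * exp (- \<tau> * u) * (real (Suc m) * t ^ m)) * indicator {1..} t * indicator {t..} u \<partial>lborel) = (\<integral>\<^sup>+t. (0::ennreal) \<partial>(lborel::real measure))"
        by (rule nn_integral_cong) (use False in \<open>auto simp: indicator_def\<close>)
      thus ?thesis using False by simp
    qed
  qed
  also have "\<dots> = (\<integral>\<^sup>+t. (\<integral>\<^sup>+u. ennreal (\<tau> * exp (- \<tau> * u) * (real (Suc m) * t ^ m)) * indicator {1..} t * indicator {t..} u \<partial>lborel) \<partial>lborel)"
  proof (rule lborel_pair.Fubini')
    have P: "Measurable.pred (lborel \<Otimes>\<^sub>M lborel) (\<lambda>x::real\<times>real. fst x \<le> snd x)" by measurable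
    have [measurable]: "{x::real\<times>real. fst x \<le> snd x} \<in> sets (lborel \<Otimes>\<^sub>M lborel)"
      using predE[OF P] by (simp add: space_pair_measure)
    have "(\<lambda>(t::real, u::real). ennreal (\<tau> * exp (- \<tau> * u) * (real (Suc m) * t ^ m)) * indicator {1..} t * indicator {t..} u)
       = (\<lambda>x. ennreal (\<tau> * exp (- \<tau> * snd x) * (real (Suc m) * fst x ^ m)) * indicator {1..} (fst x) * indicator {x::real\<times>real. fst x \<le> snd x} x)"
      by (auto simp: fun_eq_iff indicator_def)
    also have "\<dots> \<in> borel_measurable (lborel \<Otimes>\<^sub>M lborel)" by measurable
    finally show "(\<lambda>(t::real, u::real). ennreal (\<tau> * exp (- \<tau> * u) * (real (Suc m) * t ^ m)) * indicator {1..} t * indicator {t..} u) \<in> borel_measurable (lborel \<Otimes>\<^sub>M lborel)" .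
  qed
  also have "\<dots> = (\<integral>\<^sup>+t. of_nat (Suc m) * (ennreal (t ^ m * exp (- \<tau> * t)) * indicator {1..} t) \<partial>lborel)"
  proof (rule nn_integral_cong)
    fix t :: real
    have "(\<integral>\<^sup>+u. ennreal (\<tau> * exp (- \<tau> * u) * (real (Suc m) * t ^ m)) * indicator {1..} t * indicator {t..} u \<partial>lborel)
      = (\<integral>\<^sup>+u. (ennreal (real (Suc m) * t ^ m) * indicator {1..} t) * (ennreal (\<tau> * exp (- \<tau> * u)) * indicator {t..} u) \<partial>lborel)"
      by (rule nn_integral_cong) (auto simp: indicator_def ennreal_mult[symmetric] tau mult.commute simp del: of_nat_Suc intro!: ennreal_mult' mult_nonneg_nonneg less_imp_le[OF tau])
    also have "\<dots> = (ennreal (real (Suc m) * t ^ m) * indicator {1..} t) * (\<integral>\<^sup>+u. ennreal (\<tau> * exp (- \<tau> * u)) * indicator {t..} u \<partial>lborel)"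
      by (rule nn_integral_cmult) auto
    also have "\<dots> = (ennreal (real (Suc m) * t ^ m) * indicator {1..} t) * ennreal (exp (- \<tau> * t))"
      using exp_tail[OF tau] by simp
    also have "\<dots> = of_nat (Suc m) * (ennreal (t ^ m * exp (- \<tau> * t)) * indicator {1..} t)"
      by (auto simp: indicator_def ennreal_mult ennreal_of_nat_eq_real_of_nat mult_ac)
    finally show "(\<integral>\<^sup>+u. ennreal (\<tau> * exp (- \<tau> * u) * (real (Suc m) * t ^ m)) * indicator {1..} t * indicator {t..} u \<partial>lborel)
      = of_nat (Suc m) * (ennreal (t ^ m * exp (- \<tau> * t)) * indicator {1..} t)" .
  qed
  also have "\<dots> = of_nat (Suc m) * (\<integral>\<^sup>+t. ennreal (t ^ m * exp (- \<tau> * t)) * indicator {1..} t \<partial>lborel)"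
    by (rule nn_integral_cmult) auto
  finally show ?thesis .
qed

lemma pow_exp_bound:
  fixes t c :: real assumes "0 \<le> t" "0 < c"
  shows "t ^ k \<le> (real (Suc k) / c) ^ Suc k * exp (c * t) + 1"
proof -
  let ?n = "Suc k"
  have "(1 + c * t / real ?n) ^ ?n \<le> exp (c * t)"
  proof (rule exp_ge_one_plus_x_over_n_power_n)
    have "0 \<le> c * t" using assms by simp
    thus "c * t \<ge> - real ?n" by linarith
  qed simp
  moreover have "(c * t / real ?n) ^ ?n \<le> (1 + c * t / real ?n) ^ ?n"
    using assms by (intro power_mono) auto
  moreover have "(c * t / real ?n) ^ ?n = (c / real ?n) ^ ?n * t ^ ?n"
    by (simp add: power_mult_distrib[symmetric])
  ultimately have A: "(c / real ?n) ^ ?n * t ^ ?n \<le> exp (c * t)" by linarith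
  have pos: "0 < (c / real ?n) ^ ?n" using assms by simp
  have "t ^ ?n \<le> (real ?n / c) ^ ?n * exp (c * t)"
  proof -
    have "(real ?n / c) ^ ?n * ((c / real ?n) ^ ?n * t ^ ?n) \<le> (real ?n / c) ^ ?n * exp (c * t)"
      using A assms by (intro mult_left_mono) auto
    moreover have "(real ?n / c) ^ ?n * (c / real ?n) ^ ?n = 1"
      using assms by (simp add: power_mult_distrib[symmetric])
    ultimately show ?thesis by (simp add: mult.assoc[symmetric])
  qed
  moreover have "t ^ k \<le> t ^ ?n + 1"
  proof (cases "t \<le> 1")
    case True thus ?thesis using assms by (smt (verit) power_le_one zero_le_power)
  next
    case False thus ?thesis by (smt (verit) power_increasing_iff le_SucI order_refl)
  qed
  ultimately show ?thesis by linarith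
qed

lemma R_finite:
  fixes \<tau> :: real assumes tau: "\<tau> > 0"
  shows "(\<integral>\<^sup>+t. ennreal (t ^ m * exp (- \<tau> * t)) * indicator {1..} t \<partial>lborel) < \<infinity>"
proof -
  define C where "C = (real (Suc m) / (\<tau>/2)) ^ Suc m"
  have C: "0 \<le> C" using tau by (simp add: C_def)
  have "(\<integral>\<^sup>+t. ennreal (t ^ m * exp (- \<tau> * t)) * indicator {1..} t \<partial>lborel)
     \<le> (\<integral>\<^sup>+t. ennreal ((C + 1) * (2/\<tau>)) * (ennreal ((\<tau>/2) * exp (- (\<tau>/2) * t)) * indicator {1..} t) \<partial>lborel)"
  proof (rule nn_integral_mono)
    fix t :: real
    show "ennreal (t ^ m * exp (- \<tau> * t)) * indicator {1..} t
      \<le> ennreal ((C + 1) * (2/\<tau>)) * (ennreal ((\<tau>/2) * exp (- (\<tau>/2) * t)) * indicator {1..} t)"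
    proof (cases "1 \<le> t")
      case True
      have b: "t ^ m \<le> C * exp ((\<tau>/2) * t) + 1"
        using pow_exp_bound[of t "\<tau>/2" m] True tau by (simp add: C_def)
      have e1: "exp ((\<tau>/2) * t) \<ge> 1" using True tau by simp
      have "(C+1) * exp ((\<tau>/2) * t) = C * exp ((\<tau>/2) * t) + exp ((\<tau>/2) * t)" by (simp add: algebra_simps)
      hence "t ^ m \<le> (C + 1) * exp ((\<tau>/2) * t)" using b e1 by linarith
      hence "t ^ m * exp (- \<tau> * t) \<le> (C + 1) * exp ((\<tau>/2) * t) * exp (- \<tau> * t)"
        by (intro mult_right_mono) auto
      also have "\<dots> = (C + 1) * exp (- (\<tau>/2) * t)"
        by (simp add: mult.assoc exp_add[symmetric] algebra_simps)
      also have "\<dots> = ((C + 1) * (2/\<tau>)) * ((\<tau>/2) * exp (- (\<tau>/2) * t))" using tau by simp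
      finally have "ennreal (t ^ m * exp (- \<tau> * t)) \<le> ennreal ((C + 1) * (2/\<tau>)) * ennreal ((\<tau>/2) * exp (- (\<tau>/2) * t))"
        using C tau by (simp add: ennreal_mult[symmetric] ennreal_leI)
      thus ?thesis using True by simp
    qed simp
  qed
  also have "\<dots> = ennreal ((C + 1) * (2/\<tau>)) * (\<integral>\<^sup>+t. ennreal ((\<tau>/2) * exp (- (\<tau>/2) * t)) * indicator {1..} t \<partial>lborel)"
    by (rule nn_integral_cmult) auto
  also have "\<dots> = ennreal ((C + 1) * (2/\<tau>)) * ennreal (exp (- (\<tau>/2) * 1))"
    using exp_tail[of "\<tau>/2" 1] tau by simp
  also have "\<dots> < \<infinity>" by (simp add: ennreal_mult_less_top)
  finally show ?thesis .
qed

lemma R_eq: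
  fixes \<tau> :: real assumes tau: "\<tau> > 0"
  shows "(\<integral>\<^sup>+t. ennreal (t ^ m * exp (- \<tau> * t)) * indicator {1..} t \<partial>lborel) = ennreal (integral {1..} (\<lambda>t. t ^ m * exp (- \<tau> * t)))"
proof -
  have "(\<integral>\<^sup>+t\<in>{1..}. ennreal (t ^ m * exp (- \<tau> * t)) \<partial>lborel) = integral {1..} (\<lambda>t. t ^ m * exp (- \<tau> * t))"
  proof (rule set_nn_integral_lborel_eq_integral)
    show "set_borel_measurable borel {1..} (\<lambda>t::real. t ^ m * exp (- \<tau> * t))"
      unfolding set_borel_measurable_def by measurable
    show "0 \<le> t ^ m * exp (- \<tau> * t)" if "t \<in> {1..}" for t using that by simp
    show "(\<integral>\<^sup>+t\<in>{1..}. ennreal (t ^ m * exp (- \<tau> * t)) \<partial>lborel) < \<infinity>"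
      using R_finite[OF tau, of m] by simp
  qed
  thus ?thesis by simp
qed



lemma sf_lebesgue: "sigma_finite_measure (lebesgue :: 'a::euclidean_space measure)"
proof
  show "\<exists>A::'a set set. countable A \<and> A \<subseteq> sets lebesgue \<and> \<Union>A = space lebesgue \<and> (\<forall>a\<in>A. emeasure lebesgue a \<noteq> \<infinity>)"
  proof (intro exI conjI)
    show "countable (range (\<lambda>n::nat. cball (0::'a) (real n)))" by simp
    show "range (\<lambda>n::nat. cball (0::'a) (real n)) \<subseteq> sets lebesgue" by auto
    show "\<Union>(range (\<lambda>n::nat. cball (0::'a) (real n))) = space lebesgue"
      by (auto simp: real_arch_simple)
    show "\<forall>a\<in>range (\<lambda>n::nat. cball (0::'a) (real n)). emeasure lebesgue a \<noteq> \<infinity>"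
      using fmeasurableD2[OF lmeasurable_cball] by auto
  qed
qed

lemma markov_rho:
  fixes \<rho> :: "'a::euclidean_space \<Rightarrow> real"
  assumes lc: "log_concave_fun \<rho>" and int1: "(\<integral>\<^sup>+x. ennreal (\<rho> x) \<partial>lebesgue) = 1"
  shows "ennreal s * emeasure lebesgue {x. s \<le> \<rho> x} \<le> 1"
proof -
  have [measurable]: "\<rho> \<in> borel_measurable lebesgue" by (rule lc_measurable[OF lc])
  have S: "{x. s \<le> \<rho> x} \<in> sets lebesgue" by (simp add: convex_sets_lebesgue lc_convex_level[OF lc])
  have "ennreal s * emeasure lebesgue {x. s \<le> \<rho> x} = (\<integral>\<^sup>+x. ennreal s * indicator {x. s \<le> \<rho> x} x \<partial>lebesgue)"
    using nn_integral_cmult_indicator[OF S] by simp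
  also have "\<dots> \<le> (\<integral>\<^sup>+x. ennreal (\<rho> x) \<partial>lebesgue)"
    by (rule nn_integral_mono) (auto simp: indicator_def ennreal_leI)
  finally show ?thesis using int1 by simp
qed

lemma rho_pos_level:
  fixes \<rho> :: "'a::euclidean_space \<Rightarrow> real"
  assumes lc: "log_concave_fun \<rho>" and int1: "(\<integral>\<^sup>+x. ennreal (\<rho> x) \<partial>lebesgue) = 1"
  shows "\<exists>c>0. 0 < emeasure lebesgue {x. c \<le> \<rho> x}"
proof (rule ccontr)
  assume "\<not> ?thesis"
  hence z: "\<And>c. c > 0 \<Longrightarrow> emeasure lebesgue {x. c \<le> \<rho> x} = 0" by auto
  have S: "\<And>c. {x. c \<le> \<rho> x} \<in> sets lebesgue" by (simp add: convex_sets_lebesgue lc_convex_level[OF lc])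
  have N: "(\<Union>k::nat. {x. 1 / real (Suc k) \<le> \<rho> x}) \<in> null_sets lebesgue"
    using z S by (intro null_sets_UN) (auto simp: null_sets_def)
  have "AE x in lebesgue. \<rho> x = 0"
  proof (rule AE_I'[OF N], clarify)
    fix x assume "\<rho> x \<noteq> 0"
    hence "\<rho> x > 0" using lc_nonneg[OF lc, of x] by simp
    then obtain k :: nat where "1 / real (Suc k) < \<rho> x" using nat_approx_posE by blast
    thus "x \<in> (\<Union>k::nat. {x. 1 / real (Suc k) \<le> \<rho> x})" by (auto intro!: exI[of _ k] less_imp_le)
  qed
  have "(\<integral>\<^sup>+x. ennreal (\<rho> x) \<partial>lebesgue) = (\<integral>\<^sup>+x. (0::ennreal) \<partial>(lebesgue::'a measure))"
    by (rule nn_integral_cong_AE) (use \<open>AE x in lebesgue. \<rho> x = 0\<close> in \<open>eventually_elim, simp\<close>)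
  thus False using int1 by simp
qed

lemma rho_bounded:
  fixes \<rho> :: "'a::euclidean_space \<Rightarrow> real"
  assumes lc: "log_concave_fun \<rho>" and int1: "(\<integral>\<^sup>+x. ennreal (\<rho> x) \<partial>lebesgue) = 1"
  shows "\<exists>B. \<forall>x. \<rho> x \<le> B"
proof -
  obtain c where c: "c > 0" and A: "0 < emeasure lebesgue {x. c \<le> \<rho> x}"
    using rho_pos_level[OF lc int1] by blast
  let ?A = "{x. c \<le> \<rho> x}"
  have "ennreal c * emeasure lebesgue ?A \<le> 1" by (rule markov_rho[OF lc int1])
  hence "emeasure lebesgue ?A \<noteq> \<infinity>" using c by (auto simp: ennreal_mult_top top_unique)
  then obtain ar where ar: "emeasure lebesgue ?A = ennreal ar" "ar \<ge> 0"
    by (cases "emeasure lebesgue ?A") auto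
  have arp: "ar > 0" using A ar by auto
  define D where "D = 2 ^ DIM('a) / ar"
  have "\<rho> y \<le> D\<^sup>2 / c" for y
  proof (cases "\<rho> y > 0")
    case False thus ?thesis using c D_def arp by (auto intro: order_trans[of _ 0])
  next
    case True
    define s where "s = exp ((1 - 1/2) * ln c + (1/2) * ln (\<rho> y))"
    have sp: "s > 0" by (simp add: s_def)
    have sub: "(\<lambda>z. (1/2::real) *\<^sub>R z + (1/2) *\<^sub>R y) ` ?A \<subseteq> {x. s \<le> \<rho> x}"
    proof clarify
      fix z assume "c \<le> \<rho> z"
      hence "s \<le> \<rho> ((1 - 1/2) *\<^sub>R z + (1/2) *\<^sub>R y)"
        unfolding s_def using True c by (intro lc_ineq[OF lc]) auto
      thus "s \<le> \<rho> ((1/2) *\<^sub>R z + (1/2) *\<^sub>R y)" by simp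
    qed
    have "emeasure lebesgue ((\<lambda>z. (1/2::real) *\<^sub>R z + (1/2) *\<^sub>R y) ` ?A) = \<bar>1/2::real\<bar> ^ DIM('a) * emeasure lebesgue ?A"
      by (rule emeasure_lebesgue_affine)
    also have "\<dots> = ennreal ((1/2) ^ DIM('a) * ar)" using ar by (simp add: ennreal_mult ennreal_power)
    finally have eq: "emeasure lebesgue ((\<lambda>z. (1/2::real) *\<^sub>R z + (1/2) *\<^sub>R y) ` ?A) = ennreal ((1/2) ^ DIM('a) * ar)" .
    have "ennreal ((1/2) ^ DIM('a) * ar) \<le> emeasure lebesgue {x. s \<le> \<rho> x}"
      unfolding eq[symmetric]
      by (rule emeasure_mono[OF sub]) (simp add: convex_sets_lebesgue lc_convex_level[OF lc])
    hence "ennreal s * ennreal ((1/2) ^ DIM('a) * ar) \<le> 1"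
      using markov_rho[OF lc int1, of s] by (meson mult_left_mono order_trans zero_le)
    hence "s * ((1/2) ^ DIM('a) * ar) \<le> 1"
      using sp arp by (simp add: ennreal_mult[symmetric] del: ennreal_1 ennreal_mult add: ennreal_1[symmetric] ennreal_le_iff)
    hence "s \<le> D" using arp unfolding D_def by (simp add: field_simps power_divide)
    hence "s\<^sup>2 \<le> D\<^sup>2" using sp by (intro power_mono) auto
    moreover have "s\<^sup>2 = c * \<rho> y"
    proof -
      have "s\<^sup>2 = exp (ln c + ln (\<rho> y))"
        unfolding s_def power2_eq_square exp_add[symmetric] by (simp add: algebra_simps)
      also have "\<dots> = c * \<rho> y" using True c by (simp add: exp_add)
      finally show ?thesis .
    qed
    ultimately show ?thesis using c by (simp add: field_simps)
  qed
  thus ?thesis by blast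
qed



lemma scaled_inclusion:
  fixes \<rho> :: "'a::euclidean_space \<Rightarrow> real"
  assumes lc: "log_concave_fun \<rho>" and M: "M > 0" and tau: "\<delta> > 0" "\<delta> < \<tau>"
    and x0: "M * exp (- \<delta>) < \<rho> x0" and t: "1 \<le> t"
  shows "{x. M * exp (- \<tau> * t) \<le> \<rho> x} \<subseteq> (\<lambda>z. (t * \<tau> / (\<tau> - \<delta>)) *\<^sub>R z + (1 - t * \<tau> / (\<tau> - \<delta>)) *\<^sub>R x0) ` {x. exp (- \<tau>) * M \<le> \<rho> x}"
proof clarify
  fix x assume hx: "M * exp (- \<tau> * t) \<le> \<rho> x"
  define r where "r = t * \<tau> / (\<tau> - \<delta>)"
  define l where "l = 1 / r"
  have "1 * \<tau> \<le> t * \<tau>" using t tau by (intro mult_right_mono) auto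
  hence "\<tau> - \<delta> \<le> t * \<tau>" using tau by linarith
  hence r1: "r \<ge> 1" unfolding r_def using tau by (simp add: le_divide_eq_1)
  hence l: "0 < l" "l \<le> 1" unfolding l_def by auto
  have rl: "r * l = 1" using r1 unfolding l_def by simp
  define y where "y = (1 - l) *\<^sub>R x0 + l *\<^sub>R x"
  have A: "exp ((1 - l) * ln (M * exp (- \<delta>)) + l * ln (M * exp (- \<tau> * t))) \<le> \<rho> y"
    unfolding y_def using x0 hx l M by (intro lc_ineq[OF lc]) auto
  have B: "(1 - l) * ln (M * exp (- \<delta>)) + l * ln (M * exp (- \<tau> * t)) = ln M - \<tau> + l * \<delta>"
  proof -
    have "l * \<tau> * t = \<tau> - \<delta>" unfolding l_def r_def using tau t by (simp add: field_simps)
    thus ?thesis using M by (simp add: ln_mult algebra_simps)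
  qed
  have C: "exp (ln M - \<tau>) \<le> exp (ln M - \<tau> + l * \<delta>)" using l tau by simp
  have D: "exp (ln M - \<tau>) = exp (- \<tau>) * M" using M by (simp add: exp_diff exp_minus field_simps)
  have "exp (ln M - \<tau> + l * \<delta>) \<le> \<rho> y" using A B by simp
  hence "exp (- \<tau>) * M \<le> \<rho> y" using C D by linarith
  moreover have "x = r *\<^sub>R y + (1 - r) *\<^sub>R x0"
    unfolding y_def using rl by (simp add: algebra_simps scaleR_add_right)
  ultimately show "x \<in> (\<lambda>z. (t * \<tau> / (\<tau> - \<delta>)) *\<^sub>R z + (1 - t * \<tau> / (\<tau> - \<delta>)) *\<^sub>R x0) ` {x. exp (- \<tau>) * M \<le> \<rho> x}"
    unfolding r_def by blast
qed

lemma scaled_measure: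
  fixes \<rho> :: "'a::euclidean_space \<Rightarrow> real"
  assumes lc: "log_concave_fun \<rho>" and M: "M > 0" and tau: "\<delta> > 0" "\<delta> < \<tau>"
    and x0: "M * exp (- \<delta>) < \<rho> x0" and t: "1 \<le> t"
  shows "emeasure lebesgue {x. M * exp (- \<tau> * t) \<le> \<rho> x}
     \<le> ennreal ((t * \<tau> / (\<tau> - \<delta>)) ^ DIM('a)) * emeasure lebesgue {x. exp (- \<tau>) * M \<le> \<rho> x}"
proof -
  let ?r = "t * \<tau> / (\<tau> - \<delta>)"
  let ?T = "(\<lambda>z. ?r *\<^sub>R z + (1 - ?r) *\<^sub>R x0)"
  let ?K = "{x. exp (- \<tau>) * M \<le> \<rho> x}"
  have cv: "convex (?T ` ?K)"
  proof -
    have "?T ` ?K = (\<lambda>z. (1 - ?r) *\<^sub>R x0 + ?r *\<^sub>R z) ` ?K" by (simp add: add.commute)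
    thus ?thesis using convex_affinity[OF lc_convex_level[OF lc]] by metis
  qed
  have "emeasure lebesgue {x. M * exp (- \<tau> * t) \<le> \<rho> x} \<le> emeasure lebesgue (?T ` ?K)"
    by (rule emeasure_mono[OF scaled_inclusion[OF assms]]) (rule convex_sets_lebesgue[OF cv])
  also have "\<dots> = \<bar>?r\<bar> ^ DIM('a) * emeasure lebesgue ?K" by (rule emeasure_lebesgue_affine)
  also have "\<bar>?r\<bar> = ?r" using tau t by simp
  finally show ?thesis by (simp add: ennreal_power)
qed

lemma pointwise:
  fixes \<rho> :: "'a \<Rightarrow> real"
  assumes M: "M > 0" and le: "\<rho> x \<le> M" and nn: "0 \<le> \<rho> x" and tau: "\<tau> > 0"
  shows "ennreal (\<rho> x) \<le> ennreal (M * (1 - exp (- \<tau>))) * indicator {x. exp (- \<tau>) * M \<le> \<rho> x} x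
     + (\<integral>\<^sup>+t. ennreal (M * \<tau> * exp (- \<tau> * t)) * indicator {1..} t * indicator {x. M * exp (- \<tau> * t) \<le> \<rho> x} x \<partial>lborel)"
proof (cases "exp (- \<tau>) * M \<le> \<rho> x")
  case True
  have "(\<integral>\<^sup>+t. ennreal (M * \<tau> * exp (- \<tau> * t)) * indicator {1..} t * indicator {x. M * exp (- \<tau> * t) \<le> \<rho> x} x \<partial>lborel)
      = (\<integral>\<^sup>+t. ennreal M * (ennreal (\<tau> * exp (- \<tau> * t)) * indicator {1..} t) \<partial>lborel)"
  proof (rule nn_integral_cong)
    fix t :: real
    show "ennreal (M * \<tau> * exp (- \<tau> * t)) * indicator {1..} t * indicator {x. M * exp (- \<tau> * t) \<le> \<rho> x} x
        = ennreal M * (ennreal (\<tau> * exp (- \<tau> * t)) * indicator {1..} t)"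
    proof (cases "1 \<le> t")
      case True2: True
      have "M * exp (- \<tau> * t) \<le> M * exp (- \<tau>)" using True2 tau M by (simp add: mult_left_mono)
      hence "M * exp (- \<tau> * t) \<le> \<rho> x" using True by (simp add: mult.commute)
      thus ?thesis using True2 M tau by (simp add: ennreal_mult mult.assoc)
    qed simp
  qed
  also have "\<dots> = ennreal M * ennreal (exp (- \<tau> * 1))"
    using exp_tail[OF tau, of 1] by (subst nn_integral_cmult) auto
  finally have I: "(\<integral>\<^sup>+t. ennreal (M * \<tau> * exp (- \<tau> * t)) * indicator {1..} t * indicator {x. M * exp (- \<tau> * t) \<le> \<rho> x} x \<partial>lborel) = ennreal (M * exp (- \<tau>))"
    using M by (simp add: ennreal_mult)
  have "ennreal (M * (1 - exp (- \<tau>))) + ennreal (M * exp (- \<tau>)) = ennreal M"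
    using M tau by (simp add: ennreal_plus[symmetric] algebra_simps del: ennreal_plus)
  thus ?thesis using True I le by (simp add: ennreal_leI)
next
  case False
  show ?thesis
  proof (cases "\<rho> x = 0")
    case True thus ?thesis by simp
  next
    case F2: False
    hence pos: "\<rho> x > 0" using nn by simp
    define t0 where "t0 = ln (M / \<rho> x) / \<tau>"
    have "- \<tau> * t0 = ln (\<rho> x / M)" unfolding t0_def using tau M pos by (simp add: ln_div)
    hence e: "M * exp (- \<tau> * t0) = \<rho> x" using M pos by simp
    have iff: "M * exp (- \<tau> * t) \<le> \<rho> x \<longleftrightarrow> t0 \<le> t" for t
    proof -
      have "M * exp (- \<tau> * t) \<le> M * exp (- \<tau> * t0) \<longleftrightarrow> t0 \<le> t" using M tau by simp
      thus ?thesis using e by simp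
    qed
    have iff': "M * exp (- (\<tau> * t)) \<le> \<rho> x \<longleftrightarrow> t0 \<le> t" for t using iff[of t] by simp
    have "1 < t0"
    proof (rule ccontr)
      assume "\<not> 1 < t0"
      hence "M * exp (- \<tau> * 1) \<le> \<rho> x" using iff[of 1] by simp
      thus False using False by (simp add: mult.commute)
    qed
    have "(\<integral>\<^sup>+t. ennreal (M * \<tau> * exp (- \<tau> * t)) * indicator {1..} t * indicator {x. M * exp (- \<tau> * t) \<le> \<rho> x} x \<partial>lborel)
      = (\<integral>\<^sup>+t. ennreal M * (ennreal (\<tau> * exp (- \<tau> * t)) * indicator {t0..} t) \<partial>lborel)"
      by (rule nn_integral_cong) (use \<open>1 < t0\<close> M tau in \<open>auto simp: indicator_def iff' ennreal_mult mult.assoc\<close>)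
    also have "\<dots> = ennreal M * ennreal (exp (- \<tau> * t0))"
      using exp_tail[OF tau, of t0] by (subst nn_integral_cmult) auto
    also have "\<dots> = ennreal (\<rho> x)" using e M by (simp add: ennreal_mult[symmetric])
    finally show ?thesis using False by simp
  qed
qed



theorem lemma3p1:
  fixes \<rho> :: "'a::euclidean_space \<Rightarrow> real" and \<mu> :: "'a measure" and \<tau> :: real
  assumes "\<tau> > 0"
    and "log_concave_fun \<rho>"
    and "\<mu> = density lebesgue (\<lambda>x. ennreal (\<rho> x))"
    and "prob_space \<mu>"
  shows "1 \<le> ennreal (Sup (range \<rho>)
            * (real DIM('a) * integral {1..} (\<lambda>t. t ^ (DIM('a) - 1) * exp (- \<tau> * t)) + 1))
          * emeasure lebesgue {x. \<rho> x \<ge> exp (- \<tau>) * Sup (range \<rho>)}"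
proof -
  note tau = assms(1)
  note lc = assms(2)
  have nn: "\<And>x. 0 \<le> \<rho> x" using lc_nonneg[OF lc] .
  have [measurable]: "\<rho> \<in> borel_measurable lebesgue" by (rule lc_measurable[OF lc])
  have int1: "(\<integral>\<^sup>+x. ennreal (\<rho> x) \<partial>lebesgue) = 1"
  proof -
    have "emeasure \<mu> (space \<mu>) = 1" using prob_space.emeasure_space_1[OF assms(4)] .
    thus ?thesis using assms(3) by (simp add: emeasure_density)
  qed
  obtain B where B: "\<And>x. \<rho> x \<le> B" using rho_bounded[OF lc int1] by blast
  define M where "M = Sup (range \<rho>)"
  have bdd: "bdd_above (range \<rho>)" by (rule bdd_aboveI[of _ B]) (use B in auto)
  have le: "\<And>x. \<rho> x \<le> M" unfolding M_def using bdd by (simp add: cSup_upper)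
  have Mpos: "M > 0"
  proof (rule ccontr)
    assume "\<not> M > 0"
    hence "\<And>x. \<rho> x = 0" using le nn by (meson antisym not_less order_trans)
    thus False using int1 by simp
  qed
  define K where "K = {x. exp (- \<tau>) * M \<le> \<rho> x}"
  have Ksets: "K \<in> sets lebesgue" unfolding K_def by (simp add: convex_sets_lebesgue lc_convex_level[OF lc])
  obtain m where n: "DIM('a) = Suc m" using DIM_positive not0_implies_Suc by blast
  define I where "I = integral {1..} (\<lambda>t. t ^ m * exp (- \<tau> * t))"
  have I0: "0 \<le> I"
  proof (cases "(\<lambda>t. t ^ m * exp (- \<tau> * t)) integrable_on {1..}")
    case True thus ?thesis unfolding I_def by (intro integral_nonneg) auto
  next
    case False thus ?thesis unfolding I_def by (simp add: not_integrable_integral)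
  qed
  have Q: "(\<integral>\<^sup>+u. ennreal (\<tau> * exp (- \<tau> * u) * u ^ Suc m) * indicator {1..} u \<partial>lborel)
      = ennreal (exp (- \<tau>) + real (Suc m) * I)"
    using Q_eq[OF tau, of m] R_eq[OF tau, of m] I0
    by (simp add: I_def ennreal_plus ennreal_mult ennreal_of_nat_eq_real_of_nat del: of_nat_Suc)
  interpret P: pair_sigma_finite "lebesgue :: 'a measure" "lborel :: real measure"
    unfolding pair_sigma_finite_def using sf_lebesgue sigma_finite_lborel by blast
  have key: "1 \<le> ennreal (M * (1 - exp (- \<tau>))) * emeasure lebesgue K
      + (ennreal M * ennreal ((\<tau> / (\<tau> - \<delta>)) ^ Suc m) * emeasure lebesgue K) * ennreal (exp (- \<tau>) + real (Suc m) * I)"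
    if d: "0 < \<delta>" "\<delta> < \<tau>" for \<delta>
  proof -
    have "M * exp (- \<delta>) < M" using Mpos d by simp
    then obtain x0 where x0: "M * exp (- \<delta>) < \<rho> x0"
      using less_cSup_iff[of "range \<rho>" "M * exp (- \<delta>)"] bdd unfolding M_def by auto
    define g where "g x t = ennreal (M * \<tau> * exp (- \<tau> * t)) * indicator {1..} t * indicator {x. M * exp (- \<tau> * t) \<le> \<rho> x} x" for x t
    have Pm: "Measurable.pred (lebesgue \<Otimes>\<^sub>M lborel) (\<lambda>p::'a \<times> real. M * exp (- \<tau> * snd p) \<le> \<rho> (fst p))"
      by measurable
    have Ps [measurable]: "{p::'a \<times> real. M * exp (- \<tau> * snd p) \<le> \<rho> (fst p)} \<in> sets (lebesgue \<Otimes>\<^sub>M lborel)"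
      using predE[OF Pm] by (simp add: space_pair_measure)
    have gm: "case_prod g \<in> borel_measurable (lebesgue \<Otimes>\<^sub>M lborel)"
    proof -
      have "case_prod g = (\<lambda>p::'a \<times> real. ennreal (M * \<tau> * exp (- \<tau> * snd p)) * indicator {1..} (snd p) * indicator {p::'a \<times> real. M * exp (- \<tau> * snd p) \<le> \<rho> (fst p)} p)"
        by (auto simp: g_def fun_eq_iff indicator_def)
      also have "\<dots> \<in> borel_measurable (lebesgue \<Otimes>\<^sub>M lborel)" by measurable
      finally show ?thesis .
    qed
    have "1 = (\<integral>\<^sup>+x. ennreal (\<rho> x) \<partial>lebesgue)" using int1 by simp
    also have "\<dots> \<le> (\<integral>\<^sup>+x. ennreal (M * (1 - exp (- \<tau>))) * indicator K x + (\<integral>\<^sup>+t. g x t \<partial>lborel) \<partial>lebesgue)"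
      by (rule nn_integral_mono) (unfold g_def K_def, rule pointwise[where \<rho>=\<rho>, OF Mpos le nn tau])
    also have "\<dots> = (\<integral>\<^sup>+x. ennreal (M * (1 - exp (- \<tau>))) * indicator K x \<partial>lebesgue) + (\<integral>\<^sup>+x. (\<integral>\<^sup>+t. g x t \<partial>lborel) \<partial>lebesgue)"
    proof (rule nn_integral_add)
      show "(\<lambda>x. ennreal (M * (1 - exp (- \<tau>))) * indicator K x) \<in> borel_measurable lebesgue"
        using Ksets by measurable
      show "(\<lambda>x. \<integral>\<^sup>+t. g x t \<partial>lborel) \<in> borel_measurable lebesgue"
        by (rule lborel.borel_measurable_nn_integral[OF gm])
    qed
    also have "(\<integral>\<^sup>+x. ennreal (M * (1 - exp (- \<tau>))) * indicator K x \<partial>lebesgue) = ennreal (M * (1 - exp (- \<tau>))) * emeasure lebesgue K"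
      by (rule nn_integral_cmult_indicator[OF Ksets])
    also have "(\<integral>\<^sup>+x. (\<integral>\<^sup>+t. g x t \<partial>lborel) \<partial>lebesgue) = (\<integral>\<^sup>+t. (\<integral>\<^sup>+x. g x t \<partial>lebesgue) \<partial>lborel)"
      by (rule P.Fubini'[OF gm, symmetric])
    also have "\<dots> \<le> (\<integral>\<^sup>+t. (ennreal M * ennreal ((\<tau> / (\<tau> - \<delta>)) ^ Suc m) * emeasure lebesgue K) * (ennreal (\<tau> * exp (- \<tau> * t) * t ^ Suc m) * indicator {1..} t) \<partial>lborel)"
    proof (rule nn_integral_mono)
      fix t :: real
      have S: "{x. M * exp (- \<tau> * t) \<le> \<rho> x} \<in> sets lebesgue" by (simp add: convex_sets_lebesgue lc_convex_level[OF lc])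
      have "(\<integral>\<^sup>+x. g x t \<partial>lebesgue) = (ennreal (M * \<tau> * exp (- \<tau> * t)) * indicator {1..} t) * emeasure lebesgue {x. M * exp (- \<tau> * t) \<le> \<rho> x}"
        unfolding g_def by (rule nn_integral_cmult_indicator[OF S])
      also have "\<dots> \<le> (ennreal M * ennreal ((\<tau> / (\<tau> - \<delta>)) ^ Suc m) * emeasure lebesgue K) * (ennreal (\<tau> * exp (- \<tau> * t) * t ^ Suc m) * indicator {1..} t)"
      proof (cases "1 \<le> t")
        case True
        have "emeasure lebesgue {x. M * exp (- \<tau> * t) \<le> \<rho> x} \<le> ennreal ((t * \<tau> / (\<tau> - \<delta>)) ^ DIM('a)) * emeasure lebesgue K"
          unfolding K_def by (rule scaled_measure[OF lc Mpos d x0 True])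
        hence "(ennreal (M * \<tau> * exp (- \<tau> * t))) * emeasure lebesgue {x. M * exp (- \<tau> * t) \<le> \<rho> x}
           \<le> ennreal (M * \<tau> * exp (- \<tau> * t)) * (ennreal ((t * \<tau> / (\<tau> - \<delta>)) ^ DIM('a)) * emeasure lebesgue K)"
          by (rule mult_left_mono) simp
        also have "\<dots> = (ennreal M * ennreal ((\<tau> / (\<tau> - \<delta>)) ^ Suc m) * emeasure lebesgue K) * ennreal (\<tau> * exp (- \<tau> * t) * t ^ Suc m)"
        proof -
          have "ennreal (M * \<tau> * exp (- \<tau> * t)) * ennreal ((t * \<tau> / (\<tau> - \<delta>)) ^ DIM('a))
              = ennreal (M * \<tau> * exp (- \<tau> * t) * (t * \<tau> / (\<tau> - \<delta>)) ^ DIM('a))"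
            using Mpos tau True d by (intro ennreal_mult[symmetric]) auto
          also have "M * \<tau> * exp (- \<tau> * t) * (t * \<tau> / (\<tau> - \<delta>)) ^ DIM('a) = M * (\<tau> / (\<tau> - \<delta>)) ^ Suc m * (\<tau> * exp (- \<tau> * t) * t ^ Suc m)"
            unfolding n by (simp add: power_mult_distrib power_divide field_simps)
          also have "ennreal \<dots> = ennreal (M * (\<tau> / (\<tau> - \<delta>)) ^ Suc m) * ennreal (\<tau> * exp (- \<tau> * t) * t ^ Suc m)"
            by (rule ennreal_mult) (use Mpos tau True d in auto)
          also have "ennreal (M * (\<tau> / (\<tau> - \<delta>)) ^ Suc m) = ennreal M * ennreal ((\<tau> / (\<tau> - \<delta>)) ^ Suc m)"
            by (rule ennreal_mult) (use Mpos tau True d in auto)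
          finally show ?thesis by (simp add: mult_ac)
        qed
        finally show ?thesis using True by simp
      qed simp
      finally show "(\<integral>\<^sup>+x. g x t \<partial>lebesgue) \<le> (ennreal M * ennreal ((\<tau> / (\<tau> - \<delta>)) ^ Suc m) * emeasure lebesgue K) * (ennreal (\<tau> * exp (- \<tau> * t) * t ^ Suc m) * indicator {1..} t)" .
    qed
    also have "\<dots> = (ennreal M * ennreal ((\<tau> / (\<tau> - \<delta>)) ^ Suc m) * emeasure lebesgue K) * (\<integral>\<^sup>+t. ennreal (\<tau> * exp (- \<tau> * t) * t ^ Suc m) * indicator {1..} t \<partial>lborel)"
      by (rule nn_integral_cmult) auto
    also note Q
    finally show ?thesis by (simp add: add_mono)
  qed
  have G: "ennreal (Sup (range \<rho>)
            * (real DIM('a) * integral {1..} (\<lambda>t. t ^ (DIM('a) - 1) * exp (- \<tau> * t)) + 1))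
          * emeasure lebesgue {x. \<rho> x \<ge> exp (- \<tau>) * Sup (range \<rho>)}
       = ennreal (M * (real (Suc m) * I + 1)) * emeasure lebesgue K"
    by (simp only: M_def[symmetric] K_def[symmetric] n I_def diff_Suc_1)
  have "0 \<le> real (Suc m) * I" using I0 by simp
  hence pos: "0 < M * (real (Suc m) * I + 1)" using Mpos by (intro mult_pos_pos) linarith+
  show ?thesis
  proof (cases "emeasure lebesgue K = \<infinity>")
    case True
    have nz: "ennreal (M * (real (Suc m) * I + 1)) \<noteq> 0" using pos by (simp only: ennreal_eq_0_iff not_le)
    show ?thesis unfolding G True using ennreal_top_mult_left[OF nz] by simp
  next
    case False
    then obtain k where k: "emeasure lebesgue K = ennreal k" "0 \<le> k"
      by (cases "emeasure lebesgue K") auto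
    define e where "e = exp (- \<tau>)"
    have e: "0 < e" "e < 1" using tau by (auto simp: e_def)
    define f where "f \<delta> = M * (1 - e) * k + M * (\<tau> / (\<tau> - \<delta>)) ^ Suc m * k * (e + real (Suc m) * I)" for \<delta>
    have f1: "1 \<le> f \<delta>" if d: "0 < \<delta>" "\<delta> < \<tau>" for \<delta>
    proof -
      have a1: "0 \<le> M * (1 - e) * k" using Mpos e k by simp
      have a2: "0 \<le> M * (\<tau> / (\<tau> - \<delta>)) ^ Suc m * k * (e + real (Suc m) * I)"
        using Mpos e k d I0 by simp
      have "ennreal (M * (1 - exp (- \<tau>))) * emeasure lebesgue K
        + (ennreal M * ennreal ((\<tau> / (\<tau> - \<delta>)) ^ Suc m) * emeasure lebesgue K) * ennreal (exp (- \<tau>) + real (Suc m) * I)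
        = ennreal (f \<delta>)"
        unfolding f_def k(1) e_def[symmetric] using Mpos e k d I0
        by (simp add: ennreal_plus[symmetric] ennreal_mult[symmetric] mult_nonneg_nonneg del: ennreal_plus)
      hence "ennreal 1 \<le> ennreal (f \<delta>)" using key[OF d] by simp
      thus ?thesis using a1 a2 unfolding f_def by (simp add: ennreal_le_iff)
    qed
    have lim: "(f \<longlongrightarrow> M * (1 - e) * k + M * 1 * k * (e + real (Suc m) * I)) (at_right 0)"
      unfolding f_def using tau by (auto intro!: tendsto_eq_intros)
    have ev: "eventually (\<lambda>\<delta>. 1 \<le> f \<delta>) (at_right 0)"
      by (rule eventually_at_rightI[of 0 \<tau>]) (use f1 tau in auto)
    have "1 \<le> M * (1 - e) * k + M * 1 * k * (e + real (Suc m) * I)"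
      by (rule tendsto_lowerbound[OF lim ev]) simp
    also have "\<dots> = M * (real (Suc m) * I + 1) * k" by (simp add: algebra_simps)
    finally have "1 \<le> M * (real (Suc m) * I + 1) * k" .
    hence "ennreal 1 \<le> ennreal (M * (real (Suc m) * I + 1) * k)" by (rule ennreal_leI)
    also have "\<dots> = ennreal (M * (real (Suc m) * I + 1)) * emeasure lebesgue K"
      using k pos by (simp add: ennreal_mult)
    finally show ?thesis unfolding G by simp
  qed
qed

end
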